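(* Let $\mathcal{T}$ be a tower with $\mathbb{K}_0=\emptyset$ whose maps are elementary inclusions or elementary contractions (named by the naming convention below), of dimension $\Delta$ and with $n$ elementary inclusions; let $\mathcal{W}$ be its contracting forest with node costs $c$. Then every ascending path in $\mathcal{W}$ with endpoint $x$ has cost at most $2\cdot|E(x)|$, and every independent set of ascending paths in $\mathcal{W}$ has cost at most $2\cdot(\Delta+1)\cdot n$.
   Context: Elementary inclusion: $\mathbb{K}_{i+1}=\mathbb{K}_i\cup\{\sigma\}$, $\sigma\notin\mathbb{K}_i$. Elementary contraction of distinct vertices $u,v$: for one of them, say $v$, the vertex set of $\mathbb{K}_{i+1}$ is that of $\mathbb{K}_i$ minus $v$, $\phi_i(u)=\phi_i(v)=u$, identity elsewhere, $\mathbb{K}_{i+1}=\phi_i(\mathbb{K}_i)$. Dimension = maximal simplex dimension. Active small coning construction: $\hat{\mathbb{K}}_0=\emptyset$; vertices flagged active/inactive, simplex active iff all its vertices are; $\mathrm{Act}\overline{\mathrm{St}}(w,\hat{\mathbb{K}}_i)$ = active simplices of $\hat{\mathbb{K}}_i$ in the closed star of $w$; inclusion adds $\sigma$ (new vertex active); contraction of $u,v$ with $|\mathrm{Act}\overline{\mathrm{St}}(u,\hat{\mathbb{K}}_i)|\le|\mathrm{Act}\overline{\mathrm{St}}(v,\hat{\mathbb{K}}_i)|$ sets $\hat{\mathbb{K}}_{i+1}=\hat{\mathbb{K}}_i\cup\{\{v\}\cup\tau:\tau\in\mathrm{Act}\overline{\mathrm{St}}(u,\hat{\mathbb{K}}_i)\}$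 and marks $u$ inactive (symmetric otherwise). Naming convention: each contraction maps $u,v$ to the vertex not marked inactive. Contracting forest $\mathcal{W}$: start empty; a vertex inclusion of $w$ adds a single-node tree labeled $w$; inclusions of higher simplices change nothing; a contraction of $u,v$ makes the current roots labeled $u,v$ children of a new root labeled with the image vertex. An internal node $x$ corresponding to contraction $\phi_i$ has cost $c(x)=|\hat{\mathbb{K}}_{i+1}\setminus\hat{\mathbb{K}}_i|$; leaves cost $0$. $\Sigma$: the $n$ simplices added at inclusions; each vertex of $\sigma\in\Sigma$ added by $\phi_i$ corresponds to the root of the forest after step $i$ labeled with it; $E(x)$ = those $\sigma\in\Sigma$ with a vertex whose node lies in the subtree rooted at $x$. An ascending path $(x_1,\dots,x_L)$, $L\ge1$, has $x_{k+1}$ the parent of $x_k$; $x_L$ is its endpoint; its cost is the sum of costs of its nodes. A set of ascending paths is independent if their endpoints are pairwise distinct and no endpoint is a proper ancestor of another; its cost is the sum of the path costs. *)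

theory Defs
  imports Main
begin

(* Vertices have an arbitrary type 'v; a simplex is a finite nonempty 'v set;
   a complex is a set of simplices. *)

datatype 'v tower_op =
    Incl "'v set"
  | Contr 'v 'v          (* Contr u v: contraction of u and v; u is marked inactive,
                            the image vertex (naming convention) is v *)

(* state after some steps: (K_i, \<hat>K_i, set of active vertices) *)
type_synonym 'v tstate = "'v set set \<times> 'v set set \<times> 'v set"

definition cplx :: "'v tstate \<Rightarrow> 'v set set" where "cplx s = fst s"
definition cone_cplx :: "'v tstate \<Rightarrow> 'v set set" where "cone_cplx s = fst (snd s)"
definition active :: "'v tstate \<Rightarrow> 'v set" where "active s = snd (snd s)"

definition closed_star :: "'v \<Rightarrow> 'v set set \<Rightarrow> 'v set set" where
  "closed_star w L = {\<tau> \<in> L. \<exists>\<rho>\<in>L. w \<in> \<rho> \<and> \<tau> \<subseteq> \<rho>}"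

definition act_star :: "'v \<Rightarrow> 'v tstate \<Rightarrow> 'v set set" where
  "act_star w s = {\<tau> \<in> closed_star w (cone_cplx s). \<tau> \<subseteq> active s}"

definition vertex_map :: "'v \<Rightarrow> 'v \<Rightarrow> 'v \<Rightarrow> 'v" where
  "vertex_map u v x = (if x = u then v else x)"

fun tstep :: "'v tstate \<Rightarrow> 'v tower_op \<Rightarrow> 'v tstate" where
  "tstep s (Incl \<sigma>) =
     (cplx s \<union> {\<sigma>}, cone_cplx s \<union> {\<sigma>},
      if card \<sigma> = 1 then active s \<union> \<sigma> else active s)"
| "tstep s (Contr u v) =
     ((\<lambda>\<tau>. vertex_map u v ` \<tau>) ` cplx s,
      cone_cplx s \<union> {insert v \<tau> | \<tau>. \<tau> \<in> act_star u s},
      active s - {u})"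

definition init_state :: "'v tstate" where "init_state = ({}, {}, {})"

(* state before step i (i.e. K_i, \<hat>K_i, flags), steps numbered 0,1,... *)
definition state_at :: "'v tower_op list \<Rightarrow> nat \<Rightarrow> 'v tstate" where
  "state_at ops i = fold (\<lambda>op s. tstep s op) (take i ops) init_state"

definition is_vertex :: "'v \<Rightarrow> 'v set set \<Rightarrow> bool" where
  "is_vertex w K \<longleftrightarrow> {w} \<in> K"

(* validity of a step: elementary inclusion into a simplicial complex (fresh vertex
   names), or elementary contraction of distinct vertices, where the removed
   vertex u has the (weakly) smaller active closed star *)
fun valid_step :: "'v tstate \<Rightarrow> 'v tower_op \<Rightarrow> bool" where
  "valid_step s (Incl \<sigma>) \<longleftrightarrow>
     finite \<sigma> \<and> \<sigma> \<noteq> {} \<and> \<sigma> \<notin> cplx s \<and>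
     (\<forall>\<tau>. \<tau> \<noteq> {} \<and> \<tau> \<subset> \<sigma> \<longrightarrow> \<tau> \<in> cplx s) \<and>
     (card \<sigma> = 1 \<longrightarrow> \<sigma> \<inter> \<Union>(cone_cplx s) = {})"
| "valid_step s (Contr u v) \<longleftrightarrow>
     u \<noteq> v \<and> is_vertex u (cplx s) \<and> is_vertex v (cplx s) \<and>
     card (act_star u s) \<le> card (act_star v s)"

definition valid_tower :: "'v tower_op list \<Rightarrow> bool" where
  "valid_tower ops \<longleftrightarrow> (\<forall>i < length ops. valid_step (state_at ops i) (ops ! i))"

definition is_incl :: "'v tower_op \<Rightarrow> bool" where
  "is_incl op \<longleftrightarrow> (\<exists>\<sigma>. op = Incl \<sigma>)"

definition num_incl :: "'v tower_op list \<Rightarrow> nat" where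
  "num_incl ops = length (filter is_incl ops)"

definition tower_dim :: "'v tower_op list \<Rightarrow> nat" where
  "tower_dim ops = Max ({0} \<union> (\<Union>i \<in> {0..length ops}.
       (\<lambda>\<sigma>. card \<sigma> - 1) ` cplx (state_at ops i)))"

(* ---- contracting forest ----
   Nodes are identified with the index of the step creating them: a vertex inclusion
   creates a leaf, a contraction creates an internal node. *)

definition is_node :: "'v tower_op list \<Rightarrow> nat \<Rightarrow> bool" where
  "is_node ops i \<longleftrightarrow> i < length ops \<and>
     ((\<exists>w. ops ! i = Incl {w}) \<or> (\<exists>u v. ops ! i = Contr u v))"

fun root_upd :: "nat \<Rightarrow> ('v \<Rightarrow> nat) \<Rightarrow> 'v tower_op \<Rightarrow> ('v \<Rightarrow> nat)" where
  "root_upd i r (Incl \<sigma>) = (if card \<sigma> = 1 then r(the_elem \<sigma> := i) else r)"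
| "root_upd i r (Contr u v) = r(v := i)"

(* roots_at ops i w: the root labelled w of the forest after steps 0..i-1 *)
fun roots_at :: "'v tower_op list \<Rightarrow> nat \<Rightarrow> 'v \<Rightarrow> nat" where
  "roots_at ops 0 = (\<lambda>_. 0)"
| "roots_at ops (Suc i) = root_upd i (roots_at ops i) (ops ! i)"

definition parent :: "'v tower_op list \<Rightarrow> nat \<Rightarrow> nat \<Rightarrow> bool" where
  "parent ops j i \<longleftrightarrow> is_node ops j \<and> i < length ops \<and>
     (\<exists>u v. ops ! i = Contr u v \<and> (j = roots_at ops i u \<or> j = roots_at ops i v))"

definition parent_rel :: "'v tower_op list \<Rightarrow> (nat \<times> nat) set" where
  "parent_rel ops = {(j, i). parent ops j i}"

definition subtree :: "'v tower_op list \<Rightarrow> nat \<Rightarrow> nat set" where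
  "subtree ops x = {y. (y, x) \<in> (parent_rel ops)\<^sup>*}"

definition proper_ancestor :: "'v tower_op list \<Rightarrow> nat \<Rightarrow> nat \<Rightarrow> bool" where
  "proper_ancestor ops y x \<longleftrightarrow> (x, y) \<in> (parent_rel ops)\<^sup>+"

definition node_cost :: "'v tower_op list \<Rightarrow> nat \<Rightarrow> nat" where
  "node_cost ops i = (if i < length ops \<and> (\<exists>u v. ops ! i = Contr u v)
      then card (cone_cplx (state_at ops (Suc i)) - cone_cplx (state_at ops i)) else 0)"

(* E(x), with \<Sigma> indexed by the inclusion steps *)
definition E_set :: "'v tower_op list \<Rightarrow> nat \<Rightarrow> nat set" where
  "E_set ops x = {i. i < length ops \<and> (\<exists>\<sigma>. ops ! i = Incl \<sigma> \<and>
      (\<exists>w\<in>\<sigma>. roots_at ops (Suc i) w \<in> subtree ops x))}"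

definition asc_path :: "'v tower_op list \<Rightarrow> nat list \<Rightarrow> bool" where
  "asc_path ops xs \<longleftrightarrow> xs \<noteq> [] \<and> (\<forall>x \<in> set xs. is_node ops x) \<and>
     (\<forall>k. Suc k < length xs \<longrightarrow> parent ops (xs ! k) (xs ! Suc k))"

definition path_cost :: "'v tower_op list \<Rightarrow> nat list \<Rightarrow> nat" where
  "path_cost ops xs = sum_list (map (node_cost ops) xs)"

definition independent_paths :: "'v tower_op list \<Rightarrow> nat list set \<Rightarrow> bool" where
  "independent_paths ops P \<longleftrightarrow> (\<forall>p \<in> P. asc_path ops p) \<and> inj_on last P \<and>
     (\<forall>p \<in> P. \<forall>q \<in> P. p \<noteq> q \<longrightarrow> \<not> proper_ancestor ops (last p) (last q))"

end

theory Submission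
  imports Defs
begin


lemma state_Suc: "t < length ops \<Longrightarrow> state_at ops (Suc t) = tstep (state_at ops t) (ops ! t)"
  by (simp add: state_at_def take_Suc_conv_app_nth)

lemma tstep_Incl:
  "cplx (tstep s (Incl \<sigma>)) = cplx s \<union> {\<sigma>}"
  "cone_cplx (tstep s (Incl \<sigma>)) = cone_cplx s \<union> {\<sigma>}"
  "active (tstep s (Incl \<sigma>)) = (if card \<sigma> = 1 then active s \<union> \<sigma> else active s)"
  by (simp_all add: cplx_def cone_cplx_def active_def)

lemma tstep_Contr:
  "cplx (tstep s (Contr u v)) = (\<lambda>\<tau>. vertex_map u v ` \<tau>) ` cplx s"
  "cone_cplx (tstep s (Contr u v)) = cone_cplx s \<union> {insert v \<tau> | \<tau>. \<tau> \<in> act_star u s}"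
  "active (tstep s (Contr u v)) = active s - {u}"
  by (simp_all add: cplx_def cone_cplx_def active_def)

declare tstep.simps[simp del]

definition tinv :: "'v tstate \<Rightarrow> bool" where
  "tinv s \<longleftrightarrow> finite (cone_cplx s) \<and> {} \<notin> cone_cplx s \<and>
     (\<forall>\<rho>\<in>cone_cplx s. \<forall>\<tau>. \<tau> \<subseteq> \<rho> \<and> \<tau> \<noteq> {} \<longrightarrow> \<tau> \<in> cone_cplx s) \<and>
     {\<tau> \<in> cone_cplx s. \<tau> \<subseteq> active s} = cplx s \<and> active s = {a. {a} \<in> cplx s}"

lemma inv_init: "tinv init_state"
  by (simp add: tinv_def init_state_def cplx_def cone_cplx_def active_def)

lemma inv_Incl:
  assumes I: "tinv s" and V: "valid_step s (Incl \<sigma>)"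
  shows "tinv (tstep s (Incl \<sigma>))"
proof -
  let ?C = "cone_cplx s" and ?K = "cplx s" and ?A = "active s"
  have fin: "finite ?C" and ne: "{} \<notin> ?C" and cl: "\<And>\<rho> \<tau>. \<rho> \<in> ?C \<Longrightarrow> \<tau> \<subseteq> \<rho> \<Longrightarrow> \<tau> \<noteq> {} \<Longrightarrow> \<tau> \<in> ?C"
    and KA: "{\<tau> \<in> ?C. \<tau> \<subseteq> ?A} = ?K" and AV: "?A = {a. {a} \<in> ?K}"
    using I unfolding tinv_def by blast+
  from V have sf: "finite \<sigma>" "\<sigma> \<noteq> {}" "\<sigma> \<notin> ?K" and faces: "\<And>\<tau>. \<tau> \<noteq> {} \<Longrightarrow> \<tau> \<subset> \<sigma> \<Longrightarrow> \<tau> \<in> ?K"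
    and fr: "card \<sigma> = 1 \<Longrightarrow> \<sigma> \<inter> \<Union>?C = {}" by auto
  have KC: "?K \<subseteq> ?C" using KA by blast
  have cl': "\<forall>\<rho>\<in>?C \<union> {\<sigma>}. \<forall>\<tau>. \<tau> \<subseteq> \<rho> \<and> \<tau> \<noteq> {} \<longrightarrow> \<tau> \<in> ?C \<union> {\<sigma>}"
  proof (intro ballI allI impI)
    fix \<rho> \<tau> assume "\<rho> \<in> ?C \<union> {\<sigma>}" "\<tau> \<subseteq> \<rho> \<and> \<tau> \<noteq> {}"
    then show "\<tau> \<in> ?C \<union> {\<sigma>}"
    proof (cases "\<rho> = \<sigma>")
      case True
      then show ?thesis using \<open>\<tau> \<subseteq> \<rho> \<and> \<tau> \<noteq> {}\<close> faces KC
        by (metis Un_iff insertI1 psubsetI subsetD)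
    next
      case False
      then show ?thesis using \<open>\<rho> \<in> ?C \<union> {\<sigma>}\<close> \<open>\<tau> \<subseteq> \<rho> \<and> \<tau> \<noteq> {}\<close> cl by blast
    qed
  qed
  show ?thesis
  proof (cases "card \<sigma> = 1")
    case True
    then obtain w where w: "\<sigma> = {w}" by (auto simp: card_Suc_eq)
    have wn: "w \<notin> \<Union>?C" using fr True w by auto
    have "{\<tau> \<in> ?C \<union> {\<sigma>}. \<tau> \<subseteq> ?A \<union> \<sigma>} = ?K \<union> {\<sigma>}"
    proof -
      have "\<tau> \<subseteq> ?A" if "\<tau> \<in> ?C" "\<tau> \<subseteq> ?A \<union> \<sigma>" for \<tau>
        using that wn w by blast
      moreover have "\<tau> \<subseteq> ?A" if "\<tau> \<in> ?K" for \<tau> using that KA by blast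
      ultimately show ?thesis
      proof (intro equalityI subsetI)
        fix \<tau> assume "\<tau> \<in> {\<tau> \<in> ?C \<union> {\<sigma>}. \<tau> \<subseteq> ?A \<union> \<sigma>}"
        then have "\<tau> = \<sigma> \<or> (\<tau> \<in> ?C \<and> \<tau> \<subseteq> ?A \<union> \<sigma>)" by blast
        then show "\<tau> \<in> ?K \<union> {\<sigma>}"
        proof
          assume "\<tau> \<in> ?C \<and> \<tau> \<subseteq> ?A \<union> \<sigma>"
          then have "\<tau> \<in> ?C" "\<tau> \<subseteq> ?A" using wn w by blast+
          then show ?thesis using KA by blast
        qed simp
      next
        fix \<tau> assume "\<tau> \<in> ?K \<union> {\<sigma>}"
        then show "\<tau> \<in> {\<tau> \<in> ?C \<union> {\<sigma>}. \<tau> \<subseteq> ?A \<union> \<sigma>}" using KA by blast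
      qed
    qed
    moreover have "?A \<union> \<sigma> = {a. {a} \<in> ?K \<union> {\<sigma>}}" using AV w by auto
    ultimately show ?thesis using True fin ne cl' sf unfolding tinv_def tstep_Incl by simp
  next
    case False
    have sA: "\<sigma> \<subseteq> ?A"
    proof
      fix x assume x: "x \<in> \<sigma>"
      have "card \<sigma> \<noteq> 0" using sf by simp
      with False have "{x} \<noteq> \<sigma>" by auto
      with x have "{x} \<subset> \<sigma>" by auto
      then have "{x} \<in> ?K" using faces by blast
      then show "x \<in> ?A" using AV by blast
    qed
    have "{\<tau> \<in> ?C \<union> {\<sigma>}. \<tau> \<subseteq> ?A} = ?K \<union> {\<sigma>}" using KA sA by blast
    moreover have "?A = {a. {a} \<in> ?K \<union> {\<sigma>}}"
    proof -
      have "{a} \<noteq> \<sigma>" for a using False by auto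
      then show ?thesis using AV by auto
    qed
    ultimately show ?thesis using False fin ne cl' sf unfolding tinv_def tstep_Incl by simp
  qed
qed





lemma inv_Contr:
  assumes I: "tinv s" and V: "valid_step s (Contr u v)"
  shows "tinv (tstep s (Contr u v))"
proof -
  let ?C = "cone_cplx s" and ?K = "cplx s" and ?A = "active s"
  let ?N = "{insert v \<tau> | \<tau>. \<tau> \<in> act_star u s}"
  let ?f = "vertex_map u v"
  have fin: "finite ?C" and ne: "{} \<notin> ?C" and cl: "\<And>\<rho> \<tau>. \<rho> \<in> ?C \<Longrightarrow> \<tau> \<subseteq> \<rho> \<Longrightarrow> \<tau> \<noteq> {} \<Longrightarrow> \<tau> \<in> ?C"
    and KA: "{\<tau> \<in> ?C. \<tau> \<subseteq> ?A} = ?K" and AV: "?A = {a. {a} \<in> ?K}"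
    using I unfolding tinv_def by blast+
  from V have uv: "u \<noteq> v" "{u} \<in> ?K" "{v} \<in> ?K" by (auto simp: is_vertex_def)
  have KC: "?K \<subseteq> ?C" and KsubA: "\<And>\<rho>. \<rho> \<in> ?K \<Longrightarrow> \<rho> \<subseteq> ?A" using KA by blast+
  have uA: "u \<in> ?A" and vA: "v \<in> ?A" using uv(2,3) by (simp_all add: AV)
  have inK: "\<And>\<tau>. \<tau> \<in> ?C \<Longrightarrow> \<tau> \<subseteq> ?A \<Longrightarrow> \<tau> \<in> ?K" using KA by blast
  have ast: "\<tau> \<in> act_star u s \<longleftrightarrow> \<tau> \<in> ?C \<and> (\<exists>\<rho>\<in>?C. u \<in> \<rho> \<and> \<tau> \<subseteq> \<rho>) \<and> \<tau> \<subseteq> ?A" for \<tau>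
    by (auto simp: act_star_def closed_star_def)
  have "act_star u s \<subseteq> ?C" by (auto simp: act_star_def closed_star_def)
  then have finA: "finite (act_star u s)" using fin finite_subset by blast
  have finN: "finite ?N"
  proof -
    have "?N = insert v ` act_star u s" by blast
    then show ?thesis using finA by simp
  qed
  have fimg: "?f ` \<rho> = (if u \<in> \<rho> then insert v (\<rho> - {u}) else \<rho>)" for \<rho>
    by (auto simp: vertex_map_def)
  have cl': "\<forall>\<rho>\<in>?C \<union> ?N. \<forall>\<tau>. \<tau> \<subseteq> \<rho> \<and> \<tau> \<noteq> {} \<longrightarrow> \<tau> \<in> ?C \<union> ?N"
  proof (intro ballI allI impI)
    fix \<rho> \<tau> assume r: "\<rho> \<in> ?C \<union> ?N" and t: "\<tau> \<subseteq> \<rho> \<and> \<tau> \<noteq> {}"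
    show "\<tau> \<in> ?C \<union> ?N"
    proof (cases "\<rho> \<in> ?C")
      case True then show ?thesis using cl t by blast
    next
      case False
      then have "\<rho> \<in> ?N" using r by simp
      then obtain \<tau>0 where t0: "\<tau>0 \<in> act_star u s" and r0: "\<rho> = insert v \<tau>0" by auto
      from t0 obtain \<rho>0 where "\<tau>0 \<in> ?C" "\<rho>0 \<in> ?C" "u \<in> \<rho>0" "\<tau>0 \<subseteq> \<rho>0" "\<tau>0 \<subseteq> ?A"
        unfolding ast[of \<tau>0] by blast
      show ?thesis
      proof (cases "v \<in> \<tau>")
        case False
        then have "\<tau> \<subseteq> \<tau>0" using t r0 by blast
        then show ?thesis using cl \<open>\<tau>0 \<in> ?C\<close> t by blast
      next
        case True
        show ?thesis
        proof (cases "\<tau> - {v} = {}")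
          case True
          then have "\<tau> = {v}" using \<open>v \<in> \<tau>\<close> by blast
          then show ?thesis using uv(3) KC by blast
        next
          case False
          have "\<tau> - {v} \<subseteq> \<tau>0" using t r0 by blast
          then have "\<tau> - {v} \<in> ?C" using cl \<open>\<tau>0 \<in> ?C\<close> False by blast
          moreover have "\<tau> - {v} \<subseteq> \<rho>0" "\<tau> - {v} \<subseteq> ?A" using \<open>\<tau> - {v} \<subseteq> \<tau>0\<close> \<open>\<tau>0 \<subseteq> \<rho>0\<close> \<open>\<tau>0 \<subseteq> ?A\<close> by blast+
          ultimately have "\<tau> - {v} \<in> act_star u s" unfolding ast[of "\<tau> - {v}"] using \<open>\<rho>0 \<in> ?C\<close> \<open>u \<in> \<rho>0\<close> by blast
          moreover have "\<tau> = insert v (\<tau> - {v})" using \<open>v \<in> \<tau>\<close> by blast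
          ultimately show ?thesis by blast
        qed
      qed
    qed
  qed
  have KA': "{\<tau> \<in> ?C \<union> ?N. \<tau> \<subseteq> ?A - {u}} = (\<lambda>\<tau>. ?f ` \<tau>) ` ?K"
  proof (intro equalityI subsetI)
    fix \<tau> assume "\<tau> \<in> {\<tau> \<in> ?C \<union> ?N. \<tau> \<subseteq> ?A - {u}}"
    then have t: "\<tau> \<in> ?C \<union> ?N" "\<tau> \<subseteq> ?A" "u \<notin> \<tau>" by auto
    show "\<tau> \<in> (\<lambda>\<tau>. ?f ` \<tau>) ` ?K"
    proof (cases "\<tau> \<in> ?C")
      case True
      then have "\<tau> \<in> ?K" using inK t by blast
      moreover have "?f ` \<tau> = \<tau>" using fimg t by simp
      ultimately show ?thesis by (metis image_eqI)
    next
      case False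
      then have "\<tau> \<in> ?N" using t by simp
      then obtain \<tau>0 where t0: "\<tau>0 \<in> act_star u s" and r0: "\<tau> = insert v \<tau>0" by auto
      from t0 obtain \<rho>0 where "\<tau>0 \<in> ?C" "\<rho>0 \<in> ?C" "u \<in> \<rho>0" "\<tau>0 \<subseteq> \<rho>0" "\<tau>0 \<subseteq> ?A"
        unfolding ast[of \<tau>0] by blast
      have "insert u \<tau>0 \<in> ?C" using cl[of \<rho>0 "insert u \<tau>0"] \<open>\<rho>0 \<in> ?C\<close> \<open>u \<in> \<rho>0\<close> \<open>\<tau>0 \<subseteq> \<rho>0\<close> by blast
      then have "insert u \<tau>0 \<in> ?K" using inK uA \<open>\<tau>0 \<subseteq> ?A\<close> by blast
      moreover have "?f ` (insert u \<tau>0) = \<tau>" using r0 t(3) by (auto simp: vertex_map_def)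
      ultimately show ?thesis by (metis image_eqI)
    qed
  next
    fix \<tau> assume "\<tau> \<in> (\<lambda>\<tau>. ?f ` \<tau>) ` ?K"
    then obtain \<rho> where r: "\<rho> \<in> ?K" "\<tau> = ?f ` \<rho>" by blast
    have rA: "\<rho> \<subseteq> ?A" "\<rho> \<in> ?C" using r KsubA KC by blast+
    show "\<tau> \<in> {\<tau> \<in> ?C \<union> ?N. \<tau> \<subseteq> ?A - {u}}"
    proof (cases "u \<in> \<rho>")
      case False
      then have "\<tau> = \<rho>" using r fimg by simp
      then have "\<tau> \<in> ?C" "\<tau> \<subseteq> ?A - {u}" using rA False by blast+
      then show ?thesis by simp
    next
      case True
      then have te: "\<tau> = insert v (\<rho> - {u})" using r fimg by simp
      have sub: "\<tau> \<subseteq> ?A - {u}" using te rA(1) vA uv(1) by blast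
      show ?thesis
      proof (cases "\<rho> - {u} = {}")
        case True
        then have "\<tau> = {v}" using te True by (simp only:)
        then have "\<tau> \<in> ?C" using uv(3) KC by blast
        then show ?thesis using sub by simp
      next
        case False
        have "\<rho> - {u} \<in> ?C" using cl[of \<rho> "\<rho> - {u}"] rA(2) False by blast
        then have "\<rho> - {u} \<in> act_star u s" unfolding ast[of "\<rho> - {u}"] using rA \<open>u \<in> \<rho>\<close> by blast
        then have "\<tau> \<in> ?N" using te by blast
        then show ?thesis using sub by simp
      qed
    qed
  qed
  have AV': "?A - {u} = {a. {a} \<in> (\<lambda>\<tau>. ?f ` \<tau>) ` ?K}"
  proof (intro equalityI subsetI)
    fix a assume "a \<in> ?A - {u}"
    then have "{a} \<in> ?K" "?f ` {a} = {a}" using AV by (auto simp: vertex_map_def)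
    then show "a \<in> {a. {a} \<in> (\<lambda>\<tau>. ?f ` \<tau>) ` ?K}" by (metis (mono_tags, lifting) image_eqI mem_Collect_eq)
  next
    fix a assume "a \<in> {a. {a} \<in> (\<lambda>\<tau>. ?f ` \<tau>) ` ?K}"
    then obtain \<rho> where "\<rho> \<in> ?K" "{a} = ?f ` \<rho>" by blast
    then have "a \<in> ?f ` ?A" using KsubA by blast
    then show "a \<in> ?A - {u}" using uv vA by (auto simp: vertex_map_def)
  qed
  have "{} \<notin> ?N" by blast
  note nN = this
  show ?thesis unfolding tinv_def tstep_Contr
    apply (intro conjI)
    apply (rule finite_UnI[OF fin finN])
    apply (use ne nN in blast)
    apply (rule cl')
    apply (rule KA')
    by (rule AV')
qed

lemma inv_step: "tinv (tstep s op)" if "tinv s" "valid_step s op"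
proof (cases op)
  case (Incl \<sigma>)
  have "valid_step s (Incl \<sigma>)" using that(2) unfolding Incl .
  from inv_Incl[OF that(1) this] show ?thesis unfolding Incl .
next
  case (Contr u v)
  have "valid_step s (Contr u v)" using that(2) unfolding Contr .
  from inv_Contr[OF that(1) this] show ?thesis unfolding Contr .
qed

lemma valid_at: "valid_tower ops \<Longrightarrow> t < length ops \<Longrightarrow> valid_step (state_at ops t) (ops ! t)"
  by (simp add: valid_tower_def)

lemma inv_at: "valid_tower ops \<Longrightarrow> t \<le> length ops \<Longrightarrow> tinv (state_at ops t)"
proof (induction t)
  case 0 then show ?case by (simp add: state_at_def inv_init)
next
  case (Suc t)
  then have lt: "t < length ops" by simp
  then have "tinv (state_at ops t)" using Suc by simp
  from inv_step[OF this valid_at[OF Suc.prems(1) lt]] show ?case using state_Suc[OF lt] by simp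
qed




lemma root_upd_Incl1: "card \<sigma> = 1 \<Longrightarrow> \<exists>w. \<sigma> = {w} \<and> root_upd i r (Incl \<sigma>) = r(w := i)"
  by (metis card_1_singletonE root_upd.simps(1) the_elem_eq)

context
  fixes ops :: "'v tower_op list"
  assumes VT: "valid_tower ops"
begin

lemma active_iff: "t \<le> length ops \<Longrightarrow> a \<in> active (state_at ops t) \<longleftrightarrow> {a} \<in> cplx (state_at ops t)"
  using inv_at[OF VT] unfolding tinv_def by blast

lemma contr_active:
  assumes "t < length ops" "ops ! t = Contr u v"
  shows "u \<in> active (state_at ops t)" "v \<in> active (state_at ops t)" "u \<noteq> v"
  using valid_at[OF VT assms(1)] assms active_iff[of t] by (auto simp: is_vertex_def)

lemma root_node:
  "t \<le> length ops \<Longrightarrow> a \<in> active (state_at ops t) \<Longrightarrow>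
     is_node ops (roots_at ops t a) \<and> roots_at ops t a < t"
proof (induction t arbitrary: a)
  case 0 then show ?case by (simp add: state_at_def init_state_def active_def)
next
  case (Suc t)
  have lt: "t < length ops" using Suc.prems by simp
  note st = state_Suc[OF lt]
  show ?case
  proof (cases "ops ! t")
    case (Incl \<sigma>)
    show ?thesis
    proof (cases "card \<sigma> = 1")
      case True
      then obtain w where w: "\<sigma> = {w}" "root_upd t (roots_at ops t) (Incl \<sigma>) = (roots_at ops t)(w := t)"
        using root_upd_Incl1 by blast
      show ?thesis
      proof (cases "a = w")
        case True
        then show ?thesis using w Incl lt by (simp add: is_node_def)
      next
        case False
        then have "a \<in> active (state_at ops t)" using Suc.prems st Incl w by (simp add: tstep_Incl)
        then have "is_node ops (roots_at ops t a) \<and> roots_at ops t a < t" using Suc.IH lt by simp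
        then show ?thesis using w Incl False by simp
      qed
    next
      case False
      then have "a \<in> active (state_at ops t)" using Suc.prems st Incl by (simp add: tstep_Incl)
      then have "is_node ops (roots_at ops t a) \<and> roots_at ops t a < t" using Suc.IH lt by simp
      then show ?thesis using Incl False by simp
    qed
  next
    case (Contr u v)
    show ?thesis
    proof (cases "a = v")
      case True
      then show ?thesis using Contr lt by (simp add: is_node_def)
    next
      case False
      then have "a \<in> active (state_at ops t)" using Suc.prems st Contr by (simp add: tstep_Contr)
      then have "is_node ops (roots_at ops t a) \<and> roots_at ops t a < t" using Suc.IH lt by simp
      then show ?thesis using Contr False by simp
    qed
  qed
qed

lemma root_inj:
  "t \<le> length ops \<Longrightarrow> a \<in> active (state_at ops t) \<Longrightarrow> b \<in> active (state_at ops t) \<Longrightarrow> a \<noteq> b \<Longrightarrow>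
     roots_at ops t a \<noteq> roots_at ops t b"
proof (induction t arbitrary: a b)
  case 0 then show ?case by (simp add: state_at_def init_state_def active_def)
next
  case (Suc t)
  have lt: "t < length ops" using Suc.prems by simp
  note st = state_Suc[OF lt]
  have old: "roots_at ops t x < t" if "x \<in> active (state_at ops t)" for x
    using root_node[of t x] lt that by simp
  show ?case
  proof (cases "ops ! t")
    case (Incl \<sigma>)
    show ?thesis
    proof (cases "card \<sigma> = 1")
      case True
      then obtain w where w: "\<sigma> = {w}" "root_upd t (roots_at ops t) (Incl \<sigma>) = (roots_at ops t)(w := t)"
        using root_upd_Incl1 by blast
      have act: "x \<in> active (state_at ops t)" if "x \<in> active (state_at ops (Suc t))" "x \<noteq> w" for x
        using that st Incl w by (simp add: tstep_Incl)
      have r': "roots_at ops (Suc t) x = (if x = w then t else roots_at ops t x)" for x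
        using w Incl by simp
      show ?thesis
      proof (cases "a = w \<or> b = w")
        case True
        then show ?thesis using r' act old Suc.prems by (metis less_irrefl)
      next
        case False
        then show ?thesis using r' act Suc.prems Suc.IH[of a b] lt by simp
      qed
    next
      case False
      then show ?thesis using Suc.prems st Incl Suc.IH lt by (simp add: tstep_Incl)
    qed
  next
    case (Contr u v)
    have act: "x \<in> active (state_at ops t)" if "x \<in> active (state_at ops (Suc t))" for x
      using that st Contr by (simp add: tstep_Contr)
    have r': "roots_at ops (Suc t) x = (if x = v then t else roots_at ops t x)" for x
      using Contr by simp
    show ?thesis
    proof (cases "a = v \<or> b = v")
      case True
      then show ?thesis using r' act old Suc.prems by (metis less_irrefl)
    next
      case False
      then show ?thesis using r' act Suc.prems Suc.IH[of a b] lt by simp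
    qed
  qed
qed

lemma root_fresh:
  "t \<le> length ops \<Longrightarrow> a \<in> active (state_at ops t) \<Longrightarrow> k < t \<Longrightarrow> ops ! k = Contr u v \<Longrightarrow>
     roots_at ops t a \<noteq> roots_at ops k u \<and> roots_at ops t a \<noteq> roots_at ops k v"
proof (induction t arbitrary: a)
  case 0 then show ?case by simp
next
  case (Suc t)
  have lt: "t < length ops" using Suc.prems by simp
  note st = state_Suc[OF lt]
  have kl: "roots_at ops k u < k" "roots_at ops k v < k"
    using root_node[of k] contr_active[of k u v] Suc.prems by auto
  show ?case
  proof (cases "ops ! t")
    case (Incl \<sigma>)
    then have kt: "k < t" using Suc.prems by (cases "k = t") auto
    show ?thesis
    proof (cases "card \<sigma> = 1")
      case True
      then obtain w where w: "\<sigma> = {w}" "root_upd t (roots_at ops t) (Incl \<sigma>) = (roots_at ops t)(w := t)"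
        using root_upd_Incl1 by blast
      show ?thesis
      proof (cases "a = w")
        case True
        then show ?thesis using w Incl kl kt by simp
      next
        case False
        then have "a \<in> active (state_at ops t)" using Suc.prems st Incl w by (simp add: tstep_Incl)
        then show ?thesis using Suc.IH[of a] lt w Incl False kt Suc.prems by simp
      qed
    next
      case False
      then have "a \<in> active (state_at ops t)" using Suc.prems st Incl by (simp add: tstep_Incl)
      then show ?thesis using Suc.IH[of a] lt Incl False kt Suc.prems by simp
    qed
  next
    case (Contr u' v')
    show ?thesis
    proof (cases "a = v'")
      case True
      then show ?thesis using Contr kl Suc.prems by simp
    next
      case False
      then have aa: "a \<in> active (state_at ops t)" "a \<noteq> u'" using Suc.prems st Contr by (simp_all add: tstep_Contr)
      show ?thesis
      proof (cases "k = t")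
        case True
        then have "u = u'" "v = v'" using Contr Suc.prems by simp_all
        then show ?thesis using root_inj[of t a u'] root_inj[of t a v'] contr_active[of t u' v'] aa False lt Contr True
          by simp
      next
        case False
        then show ?thesis using Suc.IH[of a] aa lt Contr \<open>a \<noteq> v'\<close> Suc.prems by simp
      qed
    qed
  qed
qed

end



definition mapf :: "'v tower_op \<Rightarrow> 'v \<Rightarrow> 'v" where
  "mapf op x = (case op of Contr u v \<Rightarrow> vertex_map u v x | Incl \<sigma> \<Rightarrow> x)"

fun Mv :: "'v tower_op list \<Rightarrow> nat \<Rightarrow> nat \<Rightarrow> 'v \<Rightarrow> 'v" where
  "Mv ops j 0 x = x"
| "Mv ops j (Suc t) x = (if j \<le> t then mapf (ops ! t) (Mv ops j t x) else x)"

lemma Mv_id: "t \<le> j \<Longrightarrow> Mv ops j t x = x"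
  by (induction t) auto

lemma K_origin:
  "t \<le> length ops \<Longrightarrow> \<rho> \<in> cplx (state_at ops t) \<Longrightarrow>
     \<exists>j<t. \<exists>\<sigma>. ops ! j = Incl \<sigma> \<and> Mv ops (Suc j) t ` \<sigma> = \<rho>"
proof (induction t arbitrary: \<rho>)
  case 0 then show ?case by (simp add: state_at_def init_state_def cplx_def)
next
  case (Suc t)
  have lt: "t < length ops" using Suc.prems by simp
  note st = state_Suc[OF lt]
  show ?case
  proof (cases "ops ! t")
    case (Incl \<tau>)
    have M: "Mv ops (Suc j) (Suc t) x = Mv ops (Suc j) t x" if "j < t" for j x
      using that Incl by (simp add: mapf_def)
    have "\<rho> = \<tau> \<or> \<rho> \<in> cplx (state_at ops t)" using Suc.prems st Incl by (simp add: tstep_Incl)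
    then show ?thesis
    proof
      assume "\<rho> = \<tau>"
      then show ?thesis using Incl Mv_id[of "Suc t" "Suc t"] by (intro exI[of _ t]) auto
    next
      assume "\<rho> \<in> cplx (state_at ops t)"
      then obtain j \<sigma> where "j < t" "ops ! j = Incl \<sigma>" "Mv ops (Suc j) t ` \<sigma> = \<rho>"
        using Suc.IH lt by fastforce
      then show ?thesis using M by (intro exI[of _ j]) auto
    qed
  next
    case (Contr u v)
    obtain \<rho>0 where r0: "\<rho>0 \<in> cplx (state_at ops t)" "\<rho> = vertex_map u v ` \<rho>0"
      using Suc.prems st Contr by (auto simp: tstep_Contr)
    then obtain j \<sigma> where j: "j < t" "ops ! j = Incl \<sigma>" "Mv ops (Suc j) t ` \<sigma> = \<rho>0"
      using Suc.IH lt by fastforce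
    have M: "Mv ops (Suc j) (Suc t) x = vertex_map u v (Mv ops (Suc j) t x)" for x
      using j Contr by (simp add: mapf_def)
    have "Mv ops (Suc j) (Suc t) ` \<sigma> = \<rho>" using r0 j M by (auto simp: image_image)
    then show ?thesis using j by (intro exI[of _ j]) auto
  qed
qed

context
  fixes ops :: "'v tower_op list"
  assumes VT: "valid_tower ops"
begin

lemma parent_props:
  assumes "parent ops j k"
  shows "j < k" "k < length ops" "\<exists>u v. ops ! k = Contr u v \<and> (j = roots_at ops k u \<or> j = roots_at ops k v)"
proof -
  from assms obtain u v where uv: "k < length ops" "ops ! k = Contr u v" "j = roots_at ops k u \<or> j = roots_at ops k v"
    unfolding parent_def by blast
  then show "k < length ops" "\<exists>u v. ops ! k = Contr u v \<and> (j = roots_at ops k u \<or> j = roots_at ops k v)" by blast+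
  show "j < k" using uv root_node[OF VT, of k] contr_active[OF VT uv(1,2)] by auto
qed

lemma parent_unique_aux: "parent ops j k \<Longrightarrow> parent ops j k' \<Longrightarrow> k < k' \<Longrightarrow> False"
proof -
  assume p: "parent ops j k" "parent ops j k'" "k < k'"
  obtain u v where uv: "ops ! k = Contr u v" "j = roots_at ops k u \<or> j = roots_at ops k v"
    using parent_props(3)[OF p(1)] by blast
  obtain u' v' where uv': "ops ! k' = Contr u' v'" "j = roots_at ops k' u' \<or> j = roots_at ops k' v'"
    using parent_props(3)[OF p(2)] by blast
  have lt: "k' < length ops" using parent_props(2)[OF p(2)] .
  have "u' \<in> active (state_at ops k')" "v' \<in> active (state_at ops k')"
    using contr_active[OF VT lt uv'(1)] by auto
  then show False using root_fresh[OF VT, of k' _ k u v] uv uv' p(3) lt by fastforce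
qed

lemma sv: "single_valued (parent_rel ops)"
  unfolding single_valued_def parent_rel_def
  using parent_unique_aux by (metis case_prodD mem_Collect_eq linorder_neqE_nat)

lemma rtr_le: "(x, y) \<in> (parent_rel ops)\<^sup>* \<Longrightarrow> x \<le> y"
proof (induction rule: rtrancl_induct)
  case base then show ?case by simp
next
  case (step y z)
  then show ?case using parent_props(1)[of y z] by (simp add: parent_rel_def)
qed

lemma root_parent_ge:
  assumes "t \<le> length ops" "a \<in> active (state_at ops t)" "parent ops (roots_at ops t a) k"
  shows "t \<le> k"
proof (rule ccontr)
  assume "\<not> t \<le> k"
  then have "k < t" by simp
  obtain u v where uv: "ops ! k = Contr u v" "roots_at ops t a = roots_at ops k u \<or> roots_at ops t a = roots_at ops k v"
    using parent_props(3)[OF assms(3)] by blast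
  then show False using root_fresh[OF VT assms(1,2) \<open>k < t\<close> uv(1)] by blast
qed

lemma no_path_between_roots:
  assumes "t \<le> length ops" "a \<in> active (state_at ops t)" "b \<in> active (state_at ops t)" "a \<noteq> b"
    "(roots_at ops t a, roots_at ops t b) \<in> (parent_rel ops)\<^sup>*"
  shows False
proof -
  have ne: "roots_at ops t a \<noteq> roots_at ops t b" using root_inj[OF VT assms(1-4)] .
  from assms(5) ne obtain k where k: "(roots_at ops t a, k) \<in> parent_rel ops" "(k, roots_at ops t b) \<in> (parent_rel ops)\<^sup>*"
    by (metis converse_rtranclE)
  have "t \<le> k" using root_parent_ge[OF assms(1,2)] k(1) by (simp add: parent_rel_def)
  moreover have "k \<le> roots_at ops t b" using rtr_le[OF k(2)] .
  moreover have "roots_at ops t b < t" using root_node[OF VT assms(1,3)] by simp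
  ultimately show False by simp
qed

lemma roots_disjoint:
  assumes "t \<le> length ops" "a \<in> active (state_at ops t)" "b \<in> active (state_at ops t)" "a \<noteq> b"
    "(y, roots_at ops t a) \<in> (parent_rel ops)\<^sup>*" "(y, roots_at ops t b) \<in> (parent_rel ops)\<^sup>*"
  shows False
  using single_valued_confluent[OF sv assms(5,6)] no_path_between_roots[OF assms(1-4)]
    no_path_between_roots[OF assms(1,3,2) assms(4)[symmetric]] by blast

lemma L_root:
  "t \<le> length ops \<Longrightarrow> j < t \<Longrightarrow> ops ! j = Incl \<sigma> \<Longrightarrow> w \<in> \<sigma> \<Longrightarrow>
    Mv ops (Suc j) t w \<in> active (state_at ops t) \<and>
    (roots_at ops (Suc j) w, roots_at ops t (Mv ops (Suc j) t w)) \<in> (parent_rel ops)\<^sup>*"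
proof (induction t)
  case 0 then show ?case by simp
next
  case (Suc t)
  have lt: "t < length ops" using Suc.prems by simp
  note st = state_Suc[OF lt]
  show ?case
  proof (cases "j = t")
    case True
    have "{w} \<in> cplx (state_at ops (Suc t))"
    proof (cases "\<sigma> = {w}")
      case True
      then show ?thesis using st Suc.prems \<open>j = t\<close> by (simp add: tstep_Incl)
    next
      case False
      then have "{w} \<subset> \<sigma>" using Suc.prems by blast
      then have "{w} \<in> cplx (state_at ops t)" using valid_at[OF VT lt] Suc.prems \<open>j = t\<close> by simp
      then show ?thesis using st Suc.prems \<open>j = t\<close> by (simp add: tstep_Incl)
    qed
    then have "w \<in> active (state_at ops (Suc t))" using active_iff[OF VT Suc.prems(1)] by simp
    then show ?thesis using Mv_id[of "Suc t" "Suc j"] True by simp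
  next
    case False
    then have jt: "j < t" using Suc.prems by simp
    define a where "a = Mv ops (Suc j) t w"
    have IH: "a \<in> active (state_at ops t)" "(roots_at ops (Suc j) w, roots_at ops t a) \<in> (parent_rel ops)\<^sup>*"
      using Suc.IH lt jt Suc.prems unfolding a_def by auto
    have M: "Mv ops (Suc j) (Suc t) w = mapf (ops ! t) a" using jt unfolding a_def by simp
    show ?thesis
    proof (cases "ops ! t")
      case (Incl \<tau>)
      have aA: "a \<in> active (state_at ops (Suc t))" using IH st Incl by (simp add: tstep_Incl)
      have "roots_at ops (Suc t) a = roots_at ops t a"
      proof (cases "card \<tau> = 1")
        case True
        then obtain w' where w': "\<tau> = {w'}" "root_upd t (roots_at ops t) (Incl \<tau>) = (roots_at ops t)(w' := t)"
          using root_upd_Incl1 by blast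
        have "{a} \<in> cone_cplx (state_at ops t)"
          using IH(1) active_iff[OF VT, of t a] lt inv_at[OF VT, of t] unfolding tinv_def by auto
        moreover have "\<tau> \<inter> \<Union>(cone_cplx (state_at ops t)) = {}" using valid_at[OF VT lt] Incl True by simp
        ultimately have "a \<noteq> w'" using w' by blast
        then show ?thesis using w' Incl by simp
      next
        case False
        then show ?thesis using Incl by simp
      qed
      then show ?thesis using M Incl aA IH by (simp add: mapf_def)
    next
      case (Contr u v)
      note ca = contr_active[OF VT lt Contr]
      show ?thesis
      proof (cases "a = u \<or> a = v")
        case True
        then have M': "Mv ops (Suc j) (Suc t) w = v" using M Contr by (auto simp: mapf_def vertex_map_def)
        have "parent ops (roots_at ops t a) t"
          unfolding parent_def using root_node[OF VT _ IH(1)] lt Contr True by auto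
        then have "(roots_at ops (Suc j) w, t) \<in> (parent_rel ops)\<^sup>*"
          using IH(2) by (simp add: parent_rel_def rtrancl_into_rtrancl)
        moreover have "v \<in> active (state_at ops (Suc t))" using ca st Contr by (simp add: tstep_Contr)
        ultimately show ?thesis using M' Contr by simp
      next
        case False
        then have M': "Mv ops (Suc j) (Suc t) w = a" using M Contr by (auto simp: mapf_def vertex_map_def)
        have "a \<in> active (state_at ops (Suc t))" using IH False st Contr by (simp add: tstep_Contr)
        then show ?thesis using M' Contr False IH by simp
      qed
    qed
  qed
qed

end



lemma act_star_sub: "act_star x s \<subseteq> cone_cplx s"
  by (auto simp: act_star_def closed_star_def)

lemma c1:
  assumes I: "tinv s" and V: "valid_step s (Contr u v)"
  shows "card (cone_cplx (tstep s (Contr u v)) - cone_cplx s) \<le> card (act_star u s - act_star v s)"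
proof -
  have fin: "finite (cone_cplx s)" and cl: "\<And>\<rho> \<tau>. \<rho> \<in> cone_cplx s \<Longrightarrow> \<tau> \<subseteq> \<rho> \<Longrightarrow> \<tau> \<noteq> {} \<Longrightarrow> \<tau> \<in> cone_cplx s"
    using I unfolding tinv_def by blast+
  have finX: "finite (act_star u s - act_star v s)"
    using fin act_star_sub finite_subset by (metis Diff_subset subset_trans)
  have sub: "cone_cplx (tstep s (Contr u v)) - cone_cplx s \<subseteq> insert v ` (act_star u s - act_star v s)"
  proof
    fix \<rho> assume r: "\<rho> \<in> cone_cplx (tstep s (Contr u v)) - cone_cplx s"
    then obtain \<tau> where t: "\<tau> \<in> act_star u s" "\<rho> = insert v \<tau>" "\<rho> \<notin> cone_cplx s"
      by (auto simp: tstep_Contr)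
    have "\<tau> \<notin> act_star v s"
    proof
      assume "\<tau> \<in> act_star v s"
      then obtain \<rho>0 where "\<rho>0 \<in> cone_cplx s" "v \<in> \<rho>0" "\<tau> \<subseteq> \<rho>0"
        by (auto simp: act_star_def closed_star_def)
      then have "insert v \<tau> \<in> cone_cplx s" using cl[of \<rho>0 "insert v \<tau>"] by blast
      then show False using t by simp
    qed
    then show "\<rho> \<in> insert v ` (act_star u s - act_star v s)" using t by blast
  qed
  have "card (cone_cplx (tstep s (Contr u v)) - cone_cplx s) \<le> card (insert v ` (act_star u s - act_star v s))"
    using card_mono[OF _ sub] finX by blast
  also have "\<dots> \<le> card (act_star u s - act_star v s)" using card_image_le finX by blast
  finally show ?thesis .
qed

lemma c2:
  assumes I: "tinv s" and V: "valid_step s (Contr u v)"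
  shows "card (act_star u s - act_star v s) \<le> card (act_star v s - act_star u s)"
proof -
  have fin: "finite (cone_cplx s)" using I unfolding tinv_def by blast
  have fu: "finite (act_star u s)" and fv: "finite (act_star v s)"
    using fin act_star_sub finite_subset by metis+
  have le: "card (act_star u s) \<le> card (act_star v s)" using V by simp
  have "card (act_star u s - act_star v s) = card (act_star u s) - card (act_star u s \<inter> act_star v s)"
    using card_Diff_subset_Int fv by (metis finite_Int)
  moreover have "card (act_star v s - act_star u s) = card (act_star v s) - card (act_star v s \<inter> act_star u s)"
    using card_Diff_subset_Int fu by (metis finite_Int)
  ultimately show ?thesis using le by (simp add: Int_commute)
qed

lemma c3:
  assumes I: "tinv s" and xA: "x \<in> active s"
  shows "card (act_star x s - act_star y s) \<le> 2 * card {\<rho> \<in> cplx s. x \<in> \<rho> \<and> y \<notin> \<rho>}"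
proof -
  have fin: "finite (cone_cplx s)" and cl: "\<And>\<rho> \<tau>. \<rho> \<in> cone_cplx s \<Longrightarrow> \<tau> \<subseteq> \<rho> \<Longrightarrow> \<tau> \<noteq> {} \<Longrightarrow> \<tau> \<in> cone_cplx s"
    and KA: "{\<tau> \<in> cone_cplx s. \<tau> \<subseteq> active s} = cplx s"
    using I unfolding tinv_def by blast+
  let ?Y = "{\<rho> \<in> cplx s. x \<in> \<rho> \<and> y \<notin> \<rho>}"
  have finY: "finite ?Y" using fin KA by (metis (no_types, lifting) finite_subset mem_Collect_eq subsetI)
  have sub: "act_star x s - act_star y s \<subseteq> ?Y \<union> (\<lambda>\<rho>. \<rho> - {x}) ` ?Y"
  proof
    fix \<tau> assume t: "\<tau> \<in> act_star x s - act_star y s"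
    then obtain \<rho>0 where r0: "\<tau> \<in> cone_cplx s" "\<rho>0 \<in> cone_cplx s" "x \<in> \<rho>0" "\<tau> \<subseteq> \<rho>0" "\<tau> \<subseteq> active s"
      by (auto simp: act_star_def closed_star_def)
    have "insert x \<tau> \<in> cone_cplx s" using cl[of \<rho>0 "insert x \<tau>"] r0 by blast
    moreover have "insert x \<tau> \<subseteq> active s" using r0 xA by blast
    ultimately have inK: "insert x \<tau> \<in> cplx s" using KA by blast
    have "y \<notin> insert x \<tau>"
    proof
      assume yin: "y \<in> insert x \<tau>"
      have "\<tau> \<in> act_star y s"
      proof (cases "y = x")
        case True then show ?thesis using t by simp
      next
        case False
        then have "y \<in> \<tau>" using yin by simp
        then show ?thesis using r0 by (auto simp: act_star_def closed_star_def)
      qed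
      then show False using t by simp
    qed
    then have inY: "insert x \<tau> \<in> ?Y" using inK by simp
    show "\<tau> \<in> ?Y \<union> (\<lambda>\<rho>. \<rho> - {x}) ` ?Y"
    proof (cases "x \<in> \<tau>")
      case True
      then show ?thesis using inY by (simp add: insert_absorb)
    next
      case False
      then have "\<tau> = insert x \<tau> - {x}" by simp
      then show ?thesis using inY by blast
    qed
  qed
  have "card (act_star x s - act_star y s) \<le> card (?Y \<union> (\<lambda>\<rho>. \<rho> - {x}) ` ?Y)"
    using card_mono[OF _ sub] finY by blast
  also have "\<dots> \<le> card ?Y + card ((\<lambda>\<rho>. \<rho> - {x}) ` ?Y)" by (rule card_Un_le)
  also have "\<dots> \<le> card ?Y + card ?Y" using card_image_le[OF finY] by simp
  finally show ?thesis by simp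
qed

lemma finite_E: "finite (E_set ops x)"
proof -
  have "E_set ops x \<subseteq> {..<length ops}" unfolding E_set_def by blast
  then show ?thesis using finite_subset by blast
qed

lemma E_mono: "(a, b) \<in> (parent_rel ops)\<^sup>* \<Longrightarrow> E_set ops a \<subseteq> E_set ops b"
proof
  fix i assume ab: "(a, b) \<in> (parent_rel ops)\<^sup>*" and "i \<in> E_set ops a"
  then obtain \<sigma> w where "i < length ops" "ops ! i = Incl \<sigma>" "w \<in> \<sigma>" "(roots_at ops (Suc i) w, a) \<in> (parent_rel ops)\<^sup>*"
    unfolding E_set_def subtree_def by blast
  then show "i \<in> E_set ops b" unfolding E_set_def subtree_def using rtrancl_trans[OF _ ab] by blast
qed

context
  fixes ops :: "'v tower_op list"
  assumes VT: "valid_tower ops"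
begin

lemma c4:
  assumes i: "i \<le> length ops" and xA: "x \<in> active (state_at ops i)" and yA: "y \<in> active (state_at ops i)"
    and xy: "x \<noteq> y"
  shows "card {\<rho> \<in> cplx (state_at ops i). x \<in> \<rho> \<and> y \<notin> \<rho>}
     \<le> card (E_set ops (roots_at ops i x) - E_set ops (roots_at ops i y))"
proof -
  let ?Y = "{\<rho> \<in> cplx (state_at ops i). x \<in> \<rho> \<and> y \<notin> \<rho>}"
  define P where "P \<rho> j \<longleftrightarrow> j < i \<and> (\<exists>\<sigma>. ops ! j = Incl \<sigma> \<and> Mv ops (Suc j) i ` \<sigma> = \<rho>)" for \<rho> j
  define g where "g \<rho> = (SOME j. P \<rho> j)" for \<rho>
  have gP: "P \<rho> (g \<rho>)" if "\<rho> \<in> cplx (state_at ops i)" for \<rho>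
  proof -
    have "\<exists>j. P \<rho> j" using K_origin[OF i that] by (simp add: P_def)
    from someI_ex[OF this] show ?thesis unfolding g_def .
  qed
  have inj: "inj_on g ?Y"
  proof (rule inj_onI)
    fix \<rho>1 \<rho>2 assume r: "\<rho>1 \<in> ?Y" "\<rho>2 \<in> ?Y" "g \<rho>1 = g \<rho>2"
    from gP[of \<rho>1] r obtain \<sigma>1 where s1: "ops ! g \<rho>1 = Incl \<sigma>1" "Mv ops (Suc (g \<rho>1)) i ` \<sigma>1 = \<rho>1"
      unfolding P_def by auto
    from gP[of \<rho>2] r obtain \<sigma>2 where s2: "ops ! g \<rho>2 = Incl \<sigma>2" "Mv ops (Suc (g \<rho>2)) i ` \<sigma>2 = \<rho>2"
      unfolding P_def by auto
    show "\<rho>1 = \<rho>2" using s1 s2 r(3) by auto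
  qed
  have img: "g ` ?Y \<subseteq> E_set ops (roots_at ops i x) - E_set ops (roots_at ops i y)"
  proof
    fix j assume "j \<in> g ` ?Y"
    then obtain \<rho> where r: "\<rho> \<in> ?Y" "j = g \<rho>" by blast
    from gP[of \<rho>] r obtain \<sigma> where s: "j < i" "ops ! j = Incl \<sigma>" "Mv ops (Suc j) i ` \<sigma> = \<rho>"
      unfolding P_def by auto
    have jl: "j < length ops" using s i by simp
    have "x \<in> Mv ops (Suc j) i ` \<sigma>" using r(1) s(3) by simp
    then obtain w where w: "w \<in> \<sigma>" "Mv ops (Suc j) i w = x" by blast
    have "(roots_at ops (Suc j) w, roots_at ops i x) \<in> (parent_rel ops)\<^sup>*"
      using L_root[OF VT i s(1,2) w(1)] w(2) by simp
    then have inx: "j \<in> E_set ops (roots_at ops i x)"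
      unfolding E_set_def subtree_def using jl s(2) w(1) by blast
    have "j \<notin> E_set ops (roots_at ops i y)"
    proof
      assume "j \<in> E_set ops (roots_at ops i y)"
      then obtain w' where w': "w' \<in> \<sigma>" "(roots_at ops (Suc j) w', roots_at ops i y) \<in> (parent_rel ops)\<^sup>*"
        unfolding E_set_def subtree_def using s(2) by auto
      define b where "b = Mv ops (Suc j) i w'"
      have L: "b \<in> active (state_at ops i)" "(roots_at ops (Suc j) w', roots_at ops i b) \<in> (parent_rel ops)\<^sup>*"
        using L_root[OF VT i s(1,2) w'(1)] unfolding b_def by auto
      have "b \<in> \<rho>" using s(3) w'(1) unfolding b_def by blast
      then have "b \<noteq> y" using r(1) by auto
      then show False using roots_disjoint[OF VT i L(1) yA _ L(2) w'(2)] by blast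
    qed
    then show "j \<in> E_set ops (roots_at ops i x) - E_set ops (roots_at ops i y)" using inx by blast
  qed
  show ?thesis using card_inj_on_le[OF inj img] finite_E by blast
qed

lemma cost_child:
  assumes p: "parent ops c k"
  shows "node_cost ops k \<le> 2 * card (E_set ops k - E_set ops c)"
proof -
  obtain u v where uv: "ops ! k = Contr u v" "c = roots_at ops k u \<or> c = roots_at ops k v"
    using parent_props(3)[OF VT p] by blast
  have lt: "k < length ops" using parent_props(2)[OF VT p] .
  let ?s = "state_at ops k"
  have I: "tinv ?s" using inv_at[OF VT] lt by simp
  have V: "valid_step ?s (Contr u v)" using valid_at[OF VT lt] uv by simp
  note ca = contr_active[OF VT lt uv(1)]
  have nc: "node_cost ops k = card (cone_cplx (tstep ?s (Contr u v)) - cone_cplx ?s)"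
    unfolding node_cost_def using lt uv state_Suc[OF lt] by simp
  have pu: "(roots_at ops k u, k) \<in> parent_rel ops" and pv: "(roots_at ops k v, k) \<in> parent_rel ops"
    unfolding parent_rel_def parent_def using root_node[OF VT, of k] ca lt uv by auto
  have Eu: "E_set ops (roots_at ops k u) \<subseteq> E_set ops k" and Ev: "E_set ops (roots_at ops k v) \<subseteq> E_set ops k"
    using E_mono pu pv by blast+
  have fk: "finite (E_set ops k)" by (rule finite_E)
  show ?thesis
  proof (cases "c = roots_at ops k u")
    case True
    have "node_cost ops k \<le> card (act_star v ?s - act_star u ?s)"
      using nc c1[OF I V] c2[OF I V] by simp
    also have "\<dots> \<le> 2 * card {\<rho> \<in> cplx ?s. v \<in> \<rho> \<and> u \<notin> \<rho>}" using c3[OF I ca(2)] .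
    also have "\<dots> \<le> 2 * card (E_set ops (roots_at ops k v) - E_set ops (roots_at ops k u))"
      using c4[of k v u] lt ca by simp
    also have "\<dots> \<le> 2 * card (E_set ops k - E_set ops c)"
      using True Ev fk by (simp add: card_mono Diff_mono)
    finally show ?thesis .
  next
    case False
    then have cv: "c = roots_at ops k v" using uv by blast
    have "node_cost ops k \<le> card (act_star u ?s - act_star v ?s)"
      using nc c1[OF I V] by simp
    also have "\<dots> \<le> 2 * card {\<rho> \<in> cplx ?s. u \<in> \<rho> \<and> v \<notin> \<rho>}" using c3[OF I ca(1)] .
    also have "\<dots> \<le> 2 * card (E_set ops (roots_at ops k u) - E_set ops (roots_at ops k v))"
      using c4[of k u v] lt ca by simp
    also have "\<dots> \<le> 2 * card (E_set ops k - E_set ops c)"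
      using cv Eu fk by (simp add: card_mono Diff_mono)
    finally show ?thesis .
  qed
qed

end



context
  fixes ops :: "'v tower_op list"
  assumes VT: "valid_tower ops"
begin

lemma cost_any: "node_cost ops x \<le> 2 * card (E_set ops x)"
proof (cases "x < length ops \<and> (\<exists>u v. ops ! x = Contr u v)")
  case True
  then obtain u v where uv: "x < length ops" "ops ! x = Contr u v" by blast
  have "u \<in> active (state_at ops x)" using contr_active[OF VT uv] by simp
  then have "parent ops (roots_at ops x u) x"
    unfolding parent_def using root_node[OF VT, of x u] uv by auto
  then have "node_cost ops x \<le> 2 * card (E_set ops x - E_set ops (roots_at ops x u))"
    by (rule cost_child[OF VT])
  also have "\<dots> \<le> 2 * card (E_set ops x)"
    using card_mono[OF finite_E[of ops x] Diff_subset[of "E_set ops x" "E_set ops (roots_at ops x u)"]] by simp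
  finally show ?thesis .
next
  case False
  have "node_cost ops x = 0" unfolding node_cost_def by (subst if_not_P[OF False]) (rule refl)
  then show ?thesis by simp
qed

lemma path_bound: "asc_path ops xs \<Longrightarrow> path_cost ops xs \<le> 2 * card (E_set ops (last xs))"
proof (induction xs rule: rev_induct)
  case Nil then show ?case by (simp add: asc_path_def)
next
  case (snoc x ys)
  show ?case
  proof (cases "ys = []")
    case True
    then show ?thesis using cost_any[of x] by (simp add: path_cost_def)
  next
    case False
    have ap: "asc_path ops ys"
      unfolding asc_path_def
    proof (intro conjI allI impI)
      show "ys \<noteq> []" by fact
      show "\<forall>x\<in>set ys. is_node ops x" using snoc.prems by (simp add: asc_path_def)
      fix k assume k: "Suc k < length ys"
      then have "Suc k < length (ys @ [x])" by simp
      then have "parent ops ((ys @ [x]) ! k) ((ys @ [x]) ! Suc k)" using snoc.prems unfolding asc_path_def by blast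
      then show "parent ops (ys ! k) (ys ! Suc k)" using k by (simp add: nth_append)
    qed
    have "parent ops (last ys) x"
    proof -
      have "Suc (length ys - 1) < length (ys @ [x])" using False by simp
      then have "parent ops ((ys @ [x]) ! (length ys - 1)) ((ys @ [x]) ! Suc (length ys - 1))"
        using snoc.prems unfolding asc_path_def by blast
      moreover have "(ys @ [x]) ! (length ys - 1) = last ys" using False
        by (simp add: nth_append last_conv_nth)
      moreover have "(ys @ [x]) ! Suc (length ys - 1) = x" using False by (simp add: nth_append)
      ultimately show ?thesis by simp
    qed
    note p = this
    have c: "node_cost ops x \<le> 2 * card (E_set ops x - E_set ops (last ys))" by (rule cost_child[OF VT p])
    have "(last ys, x) \<in> parent_rel ops" using p by (simp add: parent_rel_def)
    then have sub: "E_set ops (last ys) \<subseteq> E_set ops x" using E_mono r_into_rtrancl by metis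
    have cd: "card (E_set ops x - E_set ops (last ys)) = card (E_set ops x) - card (E_set ops (last ys))"
      using card_Diff_subset[OF finite_E sub] .
    have le: "card (E_set ops (last ys)) \<le> card (E_set ops x)" using card_mono[OF finite_E sub] .
    have "path_cost ops (ys @ [x]) = path_cost ops ys + node_cost ops x" by (simp add: path_cost_def)
    also have "\<dots> \<le> 2 * card (E_set ops (last ys)) + 2 * (card (E_set ops x) - card (E_set ops (last ys)))"
      using snoc.IH[OF ap] c cd by simp
    also have "\<dots> = 2 * card (E_set ops x)" using le by simp
    finally show ?thesis by simp
  qed
qed

lemma dim_bound:
  assumes "j < length ops" "ops ! j = Incl \<sigma>"
  shows "card \<sigma> \<le> tower_dim ops + 1"
proof -
  let ?S = "{0} \<union> (\<Union>i \<in> {0..length ops}. (\<lambda>\<sigma>. card \<sigma> - 1) ` cplx (state_at ops i))"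
  have fin: "finite ?S"
  proof -
    have "finite (cplx (state_at ops i))" if "i \<in> {0..length ops}" for i
    proof -
      have "tinv (state_at ops i)" using inv_at[OF VT] that by simp
      then have "finite (cone_cplx (state_at ops i))" "cplx (state_at ops i) \<subseteq> cone_cplx (state_at ops i)"
        unfolding tinv_def by blast+
      then show ?thesis using finite_subset by blast
    qed
    then show ?thesis by simp
  qed
  have "\<sigma> \<in> cplx (state_at ops (Suc j))" using state_Suc[OF assms(1)] assms(2) by (simp add: tstep_Incl)
  then have "card \<sigma> - 1 \<in> (\<lambda>\<sigma>. card \<sigma> - 1) ` cplx (state_at ops (Suc j))" by (rule imageI)
  moreover have "Suc j \<in> {0..length ops}" using assms(1) by simp
  ultimately have "card \<sigma> - 1 \<in> (\<Union>i \<in> {0..length ops}. (\<lambda>\<sigma>. card \<sigma> - 1) ` cplx (state_at ops i))"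
    by (rule UN_I[rotated])
  then have "card \<sigma> - 1 \<in> ?S" by (rule UnI2)
  then have "card \<sigma> - 1 \<le> Max ?S" using fin by simp
  then show ?thesis unfolding tower_dim_def by simp
qed

lemma indep_bound:
  assumes ind: "independent_paths ops P"
  shows "(\<Sum>p\<in>P. path_cost ops p) \<le> 2 * (tower_dim ops + 1) * num_incl ops"
proof -
  have ap: "\<And>p. p \<in> P \<Longrightarrow> asc_path ops p" and inj: "inj_on last P"
    and na: "\<And>p q. p \<in> P \<Longrightarrow> q \<in> P \<Longrightarrow> p \<noteq> q \<Longrightarrow> \<not> proper_ancestor ops (last p) (last q)"
    using ind unfolding independent_paths_def by blast+
  let ?X = "last ` P"
  let ?J = "{j. j < length ops \<and> is_incl (ops ! j)}"
  let ?D = "tower_dim ops + 1"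
  have finX: "finite ?X"
  proof -
    have "?X \<subseteq> {..<length ops}"
    proof
      fix x assume "x \<in> ?X"
      then obtain p where p: "p \<in> P" "x = last p" by blast
      then have "p \<noteq> []" "\<forall>y\<in>set p. is_node ops y" using ap unfolding asc_path_def by blast+
      then have "is_node ops x" using p by simp
      then show "x \<in> {..<length ops}" by (simp add: is_node_def)
    qed
    then show ?thesis using finite_subset by blast
  qed
  have finJ: "finite ?J" by simp
  have nJ: "card ?J = num_incl ops" unfolding num_incl_def by (simp add: length_filter_conv_card)
  have EJ: "E_set ops x \<subseteq> ?J" for x unfolding E_set_def is_incl_def by blast
  have cardE: "card (E_set ops x) = (\<Sum>j\<in>?J. if j \<in> E_set ops x then 1 else 0)" for x
  proof -
    have "(\<Sum>j\<in>?J. if j \<in> E_set ops x then 1 else 0) = (\<Sum>j\<in>?J \<inter> E_set ops x. (1::nat))"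
      using sum.inter_restrict[OF finJ, of "\<lambda>_. (1::nat)" "E_set ops x"] by simp
    also have "\<dots> = card (E_set ops x)" using EJ[of x] by (simp add: Int_absorb1)
    finally show ?thesis by simp
  qed
  have per_j: "card (?X \<inter> {x. j \<in> E_set ops x}) \<le> ?D" if jJ: "j \<in> ?J" for j
  proof -
    obtain \<sigma> where s: "ops ! j = Incl \<sigma>" using jJ unfolding is_incl_def by blast
    have jl: "j < length ops" using jJ by simp
    have fs: "finite \<sigma>" using valid_at[OF VT jl] s by simp
    let ?B = "\<lambda>w. {x \<in> ?X. (roots_at ops (Suc j) w, x) \<in> (parent_rel ops)\<^sup>*}"
    have sub: "?X \<inter> {x. j \<in> E_set ops x} \<subseteq> (\<Union>w\<in>\<sigma>. ?B w)"
    proof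
      fix x assume x: "x \<in> ?X \<inter> {x. j \<in> E_set ops x}"
      then have "j \<in> E_set ops x" by simp
      then obtain \<sigma>' w where w: "ops ! j = Incl \<sigma>'" "w \<in> \<sigma>'" "(roots_at ops (Suc j) w, x) \<in> (parent_rel ops)\<^sup>*"
        unfolding E_set_def subtree_def by auto
      have "\<sigma>' = \<sigma>" using w(1) s by simp
      then have "x \<in> ?B w" "w \<in> \<sigma>" using x w by auto
      then show "x \<in> (\<Union>w\<in>\<sigma>. ?B w)" by (rule UN_I[rotated])
    qed
    have B1: "card (?B w) \<le> 1" for w
    proof -
      have "finite (?B w)" using finX by simp
      moreover have "\<forall>a1\<in>?B w. \<forall>a2\<in>?B w. a1 = a2"
      proof (intro ballI, rule ccontr)
        fix a1 a2 assume a: "a1 \<in> ?B w" "a2 \<in> ?B w" "a1 \<noteq> a2"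
        from a(1) obtain p1 where p1: "p1 \<in> P" "a1 = last p1" by auto
        from a(2) obtain p2 where p2: "p2 \<in> P" "a2 = last p2" by auto
        note pp = p1 p2
        have "p1 \<noteq> p2"
        proof
          assume "p1 = p2" then show False using pp a(3) by simp
        qed
        have conf: "(a1, a2) \<in> (parent_rel ops)\<^sup>* \<or> (a2, a1) \<in> (parent_rel ops)\<^sup>*"
        proof -
          have "(roots_at ops (Suc j) w, a1) \<in> (parent_rel ops)\<^sup>*" "(roots_at ops (Suc j) w, a2) \<in> (parent_rel ops)\<^sup>*"
            using a(1,2) by simp_all
          from single_valued_confluent[OF sv[OF VT] this] show ?thesis .
        qed
        have n1: "(a2, a1) \<notin> (parent_rel ops)\<^sup>+"
          using na[OF pp(1) pp(3) \<open>p1 \<noteq> p2\<close>] pp(2,4) unfolding proper_ancestor_def by simp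
        have n2: "(a1, a2) \<notin> (parent_rel ops)\<^sup>+"
          using na[OF pp(3) pp(1)] \<open>p1 \<noteq> p2\<close> pp(2,4) unfolding proper_ancestor_def by simp
        show False
        proof (cases "(a1, a2) \<in> (parent_rel ops)\<^sup>*")
          case True
          then have "(a1, a2) \<in> (parent_rel ops)\<^sup>+" using rtranclD[OF True] a(3) by blast
          then show False using n2 by contradiction
        next
          case False
          then have r21: "(a2, a1) \<in> (parent_rel ops)\<^sup>*" using conf by blast
          have "(a2, a1) \<in> (parent_rel ops)\<^sup>+" using rtranclD[OF r21] a(3) by blast
          then show False using n1 by contradiction
        qed
      qed
      ultimately have "card (?B w) \<le> Suc 0" by (rule iffD2[OF card_le_Suc0_iff_eq])
      then show ?thesis by simp
    qed
    have finU: "finite (\<Union>w\<in>\<sigma>. ?B w)" by (rule finite_subset[OF _ finX]) blast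
    have "card (?X \<inter> {x. j \<in> E_set ops x}) \<le> card (\<Union>w\<in>\<sigma>. ?B w)"
      by (rule card_mono[OF finU sub])
    also have "\<dots> \<le> (\<Sum>w\<in>\<sigma>. card (?B w))" by (rule card_UN_le[OF fs])
    also have "\<dots> \<le> (\<Sum>w\<in>\<sigma>. 1)" using B1 by (intro sum_mono) simp
    also have "\<dots> = card \<sigma>" by simp
    also have "\<dots> \<le> ?D" using dim_bound[OF jl s] .
    finally show ?thesis .
  qed
  have sumX: "(\<Sum>x\<in>?X. card (E_set ops x)) \<le> ?D * num_incl ops"
  proof -
    have "(\<Sum>x\<in>?X. card (E_set ops x)) = (\<Sum>x\<in>?X. \<Sum>j\<in>?J. if j \<in> E_set ops x then 1 else 0)"
      using cardE by simp
    also have "\<dots> = (\<Sum>j\<in>?J. \<Sum>x\<in>?X. if j \<in> E_set ops x then 1 else 0)" by (rule sum.swap)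
    also have "\<dots> = (\<Sum>j\<in>?J. card (?X \<inter> {x. j \<in> E_set ops x}))"
    proof (rule sum.cong[OF refl])
      fix j
      have "(\<Sum>x\<in>?X. if j \<in> E_set ops x then 1 else 0) = (\<Sum>x\<in>?X \<inter> {x. j \<in> E_set ops x}. (1::nat))"
        using sum.inter_restrict[OF finX, of "\<lambda>_. (1::nat)" "{x. j \<in> E_set ops x}"] by simp
      then show "(\<Sum>x\<in>?X. if j \<in> E_set ops x then 1 else 0) = card (?X \<inter> {x. j \<in> E_set ops x})" by simp
    qed
    also have "\<dots> \<le> (\<Sum>j\<in>?J. ?D)"
      using per_j by (intro sum_mono) blast
    also have "\<dots> = ?D * num_incl ops" using nJ by simp
    finally show ?thesis .
  qed
  have "(\<Sum>p\<in>P. path_cost ops p) \<le> (\<Sum>p\<in>P. 2 * card (E_set ops (last p)))"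
    using path_bound ap by (intro sum_mono) blast
  also have "\<dots> = (\<Sum>x\<in>?X. 2 * card (E_set ops x))"
    using sum.reindex[OF inj, of "\<lambda>x. 2 * card (E_set ops x)"] by simp
  also have "\<dots> = 2 * (\<Sum>x\<in>?X. card (E_set ops x))" by (simp add: sum_distrib_left)
  also have "\<dots> \<le> 2 * (?D * num_incl ops)" using sumX by simp
  finally show ?thesis by (simp add: mult.assoc)
qed

end

theorem lemma9:
  fixes ops :: "'v tower_op list"
  assumes "valid_tower ops"
  shows "(\<forall>xs. asc_path ops xs \<longrightarrow> path_cost ops xs \<le> 2 * card (E_set ops (last xs))) \<and>
         (\<forall>P. independent_paths ops P \<longrightarrow>
              (\<Sum>p\<in>P. path_cost ops p) \<le> 2 * (tower_dim ops + 1) * num_incl ops)"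
  using path_bound[OF assms] indep_bound[OF assms] by blast


end
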